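(* Let $C\subseteq\mathbb{P}^2_{\mathbb{Q}}$ be the conic $X^2+Y^2+Z^2=0$, let $V\subseteq\operatorname{Aut}(C)$ be the Klein four-group generated by $[X:Y:Z]\mapsto[-X:-Y:Z]$ and $[X:Y:Z]\mapsto[X:-Y:-Z]$, and let $K'=\bigcup_{m\ \mathrm{odd}}K_m$ be the compositum of the cyclotomic fields $K_m$ with $m$ odd. Let $D$ be a twist of $C$ by a cocycle $\psi\colon\operatorname{Gal}(K'/\mathbb{Q})\to V$ (with trivial Galois action on $V$). Then $D$ has no rational points.
   Context: $K_m=\mathbb{Q}(e^{2\pi i/m})$. The twist of $C$ by $\psi$ is a curve $D$ over $\mathbb{Q}$ together with an isomorphism $F\colon C_{K'}\to D_{K'}$ such that $F^{-1}\circ\sigma(F)=\psi(\sigma)$ for all $\sigma\in\operatorname{Gal}(K'/\mathbb{Q})$. *)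

theory Defs
  imports "HOL-Analysis.Analysis"
begin

definition is_subfield :: "complex set \<Rightarrow> bool" where
  "is_subfield F \<longleftrightarrow> 0 \<in> F \<and> 1 \<in> F \<and>
     (\<forall>x\<in>F. \<forall>y\<in>F. x + y \<in> F \<and> x - y \<in> F \<and> x * y \<in> F) \<and>
     (\<forall>x\<in>F. x \<noteq> 0 \<longrightarrow> inverse x \<in> F)"

definition cyc_field :: "nat \<Rightarrow> complex set" where
  "cyc_field m = \<Inter>{F. is_subfield F \<and> cis (2 * pi / real m) \<in> F}"

definition Kprime :: "complex set" where
  "Kprime = \<Union>{cyc_field m | m. odd m}"

definition galK :: "(complex \<Rightarrow> complex) set" where
  "galK = {\<sigma>. bij_betw \<sigma> Kprime Kprime \<and>
     (\<forall>x\<in>Kprime. \<forall>y\<in>Kprime. \<sigma> (x + y) = \<sigma> x + \<sigma> y \<and> \<sigma> (x * y) = \<sigma> x * \<sigma> y) \<and>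
     (\<forall>x. x \<notin> Kprime \<longrightarrow> \<sigma> x = x)}"

text \<open>Quadratic form attached to a 3x3 matrix; the conic C is given by qf (mat 1).\<close>
definition qf :: "complex^3^3 \<Rightarrow> complex^3 \<Rightarrow> complex" where
  "qf A x = (\<Sum>i\<in>UNIV. \<Sum>j\<in>UNIV. x$i * A$i$j * x$j)"

definition diag3 :: "complex \<Rightarrow> complex \<Rightarrow> complex \<Rightarrow> complex^3^3" where
  "diag3 a b c = (\<chi> i j. if i = j then (if i = 1 then a else if i = 2 then b else c) else 0)"

text \<open>The Klein four-group V generated by [X:Y:Z] -> [-X:-Y:Z] and [X:Y:Z] -> [X:-Y:-Z],
  represented by diagonal matrices (these are the chosen matrix representatives).\<close>
definition kleinV :: "(complex^3^3) set" where
  "kleinV = {mat 1, diag3 (-1) (-1) 1, diag3 1 (-1) (-1), diag3 (-1) 1 (-1)}"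

definition gal_mat :: "(complex \<Rightarrow> complex) \<Rightarrow> complex^3^3 \<Rightarrow> complex^3^3" where
  "gal_mat \<sigma> M = (\<chi> i j. \<sigma> (M$i$j))"

definition scale_mat :: "complex \<Rightarrow> complex^3^3 \<Rightarrow> complex^3^3" where
  "scale_mat c M = (\<chi> i j. c * M$i$j)"

end

theory Submission
  imports Defs "Berlekamp_Zassenhaus.Factor_Bound" "HOL-Library.Z2"
begin

interpretation of_rat_poly_hom: map_poly_comm_ring_hom "of_rat :: rat \<Rightarrow> complex" ..

definition evq :: "rat poly \<Rightarrow> complex \<Rightarrow> complex" where
  "evq p z = poly (map_poly of_rat p) z"
definition evz :: "int poly \<Rightarrow> complex \<Rightarrow> complex" where
  "evz p z = poly (of_int_poly p) z"

lemma evq_add[simp]: "evq (p + q) z = evq p z + evq q z"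
  by (simp add: evq_def hom_distribs)
lemma evq_diff[simp]: "evq (p - q) z = evq p z - evq q z"
  by (simp add: evq_def hom_distribs)
lemma evq_mult[simp]: "evq (p * q) z = evq p z * evq q z"
  by (simp add: evq_def hom_distribs)
lemma evq_smult[simp]: "evq (Polynomial.smult c p) z = of_rat c * evq p z"
  by (simp add: evq_def hom_distribs)
lemma evq_pCons: "evq (pCons a p) z = of_rat a + z * evq p z"
  by (simp add: evq_def hom_distribs)
lemma evq_const[simp]: "evq [:c:] z = of_rat c"
  using evq_pCons[of c 0 z] by (simp add: evq_def)
lemma evq_pcompose: "evq (pcompose p q) z = evq p (evq q z)"
  by (simp add: evq_def of_rat_hom.map_poly_pcompose poly_pcompose)
lemma evq_monom: "evq (Polynomial.monom 1 n) z = z ^ n"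
  by (simp add: evq_def poly_monom)
lemma evq_of_int: "evq (of_int_poly p) z = evz p z"
  by (simp add: evq_def evz_def map_poly_map_poly o_def)
lemma evz_add[simp]: "evz (p + q) z = evz p z + evz q z"
  by (simp add: evz_def hom_distribs)
lemma evz_diff[simp]: "evz (p - q) z = evz p z - evz q z"
  by (simp add: evz_def hom_distribs)
lemma evz_mult[simp]: "evz (p * q) z = evz p z * evz q z"
  by (simp add: evz_def hom_distribs)
lemma evz_smult[simp]: "evz (Polynomial.smult c p) z = of_int c * evz p z"
  by (simp add: evz_def hom_distribs)
lemma evz_pCons: "evz (pCons a p) z = of_int a + z * evz p z"
  by (simp add: evz_def hom_distribs)
lemma evz_pcompose: "evz (pcompose p q) z = evz p (evz q z)"
  by (simp add: evz_def of_int_hom.map_poly_pcompose poly_pcompose)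
lemma evz_monom: "evz (Polynomial.monom 1 n) z = z ^ n"
  by (simp add: evz_def poly_monom)
lemma evz_one[simp]: "evz 1 z = 1"
  by (simp add: evz_def)
lemma evq_one[simp]: "evq 1 z = 1"
  by (simp add: evq_def)

lemma evz_const[simp]: "evz [:c:] z = of_int c"
  using evz_pCons[of c 0 z] by (simp add: evz_def)

lemma bit_two: "(2::bit poly) = 0"
  by (simp add: numeral_poly)

lemma bit_frob: "pcompose (q :: bit poly) [:0,0,1:] = q ^ 2"
proof (induction q)
  case 0
  then show ?case by simp
next
  case (pCons a q)
  have aa: "a * a = a" by (cases a) auto
  have X2: "[:0,0,1:] = [:0,1::bit:] * [:0,1:]"
    by simp
  have e1: "pCons a q = [:a:] + [:0,1:] * q"
    by (simp add: pCons_0_as_mult[symmetric])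
  have "(pCons a q)^2 = [:a:]*[:a:] + 2*[:a:]*([:0,1:] * q) + ([:0,1:] * q)^2"
    unfolding e1 by (simp add: power2_eq_square algebra_simps)
  also have "... = [:a:] + [:0,0,1:] * q^2"
    using aa X2 by (simp add: bit_two power2_eq_square algebra_simps)
  finally have "(pCons a q)^2 = [:a:] + [:0,0,1:] * q^2" .
  moreover have "pcompose (pCons a q) [:0,0,1:] = [:a:] + [:0,0,1:] * q^2"
    using pCons by (simp add: pcompose_pCons)
  ultimately show ?case by simp
qed


lemma bit_double: "(x::bit poly) + x = 0"
proof -
  have "x + x = 2 * x" by simp
  then show ?thesis by (simp add: bit_two)
qed

lemma bit_neg: "- (x::bit poly) = x"
  using bit_double[of x] by (simp add: add_eq_0_iff)

lemma bit_of_nat: "(of_nat n :: bit) = (if odd n then 1 else 0)"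
  by (induction n) auto

lemma bit_of_nat_odd: "odd n \<Longrightarrow> (of_nat n :: bit) = 1"
  by (simp add: bit_of_nat)

lemma bit_no_sq: 
  fixes a b :: "bit poly"
  assumes ab: "a * b = Polynomial.monom 1 L + 1" and L: "odd L" and dv: "a dvd b^2" and deg: "degree a \<ge> 1"
  shows False
proof -
  define f where "f = Polynomial.monom (1::bit) L + 1"
  have L1: "L \<ge> 1" using L by presburger
  have pf: "pderiv f = Polynomial.monom 1 (L - 1)"
    unfolding f_def using bit_of_nat_odd[OF L] by (simp add: pderiv_add pderiv_monom)
  have Xm: "[:0,1:] * Polynomial.monom (1::bit) (L - 1) = Polynomial.monom 1 L"
    using L1 by (metis Suc_diff_1 less_le_trans less_numeral_extra(1) monom_Suc pCons_0_as_mult)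
  have "[:0,1:] * pderiv f + f = Polynomial.monom 1 L + Polynomial.monom 1 L + 1"
    unfolding pf Xm by (simp add: f_def add.assoc)
  then have one: "[:0,1:] * pderiv f + f = 1"
    by (simp add: bit_double)
  obtain k where k: "b^2 = a * k" using dv unfolding dvd_def by blast
  have pab: "pderiv f = a * pderiv b + b * pderiv a"
    using ab unfolding f_def[symmetric] by (metis pderiv_mult)
  have fa: "f = a * b" using ab unfolding f_def by simp
  have kk: "b * b = a * k" using k by (simp add: power2_eq_square)
  have "b = b * ([:0,1:] * pderiv f + f)" using one by simp
  also have "... = [:0,1:] * a * b * pderiv b + [:0,1:] * (b*b) * pderiv a + a * (b*b)"
    unfolding fa by (simp add: pderiv_mult algebra_simps)
  also have "... = a * ([:0,1:] * b * pderiv b + [:0,1:] * pderiv a * k + b * b)"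
    unfolding kk by (simp add: algebra_simps)
  finally have "a dvd b" by (metis dvd_triv_left)
  then obtain m where m: "b = a * m" unfolding dvd_def by blast
  have "pderiv f = pderiv (a * (a * m))" using ab m unfolding f_def by simp
  also have "... = a * (a * pderiv m) + (a * m * pderiv a + a * m * pderiv a)"
    by (simp add: pderiv_mult algebra_simps)
  also have "... = a * (a * pderiv m)" by (simp add: bit_double)
  finally have "a dvd pderiv f" by simp
  moreover have "a dvd f" using ab unfolding f_def[symmetric] by (metis dvd_triv_left)
  ultimately have "a dvd [:0,1:] * pderiv f + f" by (meson dvd_add dvd_mult)
  then have "a dvd 1" using one by simp
  moreover have "a \<noteq> 0" using deg by auto
  ultimately have "degree a = 0" using is_unit_iff_degree by blast
  then show False using deg by simp
qed

definition fpoly :: "nat \<Rightarrow> int poly" where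
  "fpoly L = Polynomial.monom 1 L - 1"

lemma evz_fpoly: "evz (fpoly L) z = z ^ L - 1"
  by (simp add: fpoly_def evz_monom)

lemma fpoly_coeff: "L \<ge> 1 \<Longrightarrow> Polynomial.coeff (fpoly L) L = 1"
  by (simp add: fpoly_def coeff_monom)

lemma fpoly_degree: "L \<ge> 1 \<Longrightarrow> degree (fpoly L) = L"
proof -
  assume L: "L \<ge> 1"
  have "degree (fpoly L) \<le> L" unfolding fpoly_def
    by (metis degree_diff_le degree_monom_le degree_1 le_zero_eq linear)
  moreover have "L \<le> degree (fpoly L)" using fpoly_coeff[OF L] by (simp add: le_degree)
  ultimately show ?thesis by simp
qed

lemma fpoly_lead: "L \<ge> 1 \<Longrightarrow> lead_coeff (fpoly L) = 1"
  using fpoly_coeff fpoly_degree by simp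

lemma fpoly_nz: "L \<ge> 1 \<Longrightarrow> fpoly L \<noteq> 0"
  using fpoly_lead by fastforce

lemma min_poly_ex:
  assumes "evz (fpoly L) \<zeta> = 0"
  shows "\<exists>g. g dvd fpoly L \<and> evz g \<zeta> = 0 \<and> (\<forall>g'. g' dvd fpoly L \<and> evz g' \<zeta> = 0 \<longrightarrow> degree g \<le> degree g')"
proof -
  let ?P = "\<lambda>n. \<exists>g. g dvd fpoly L \<and> evz g \<zeta> = 0 \<and> degree g = n"
  have "?P (degree (fpoly L))" using assms by (intro exI[of _ "fpoly L"]) auto
  then have "?P (LEAST n. ?P n)" by (rule LeastI)
  then obtain g where g: "g dvd fpoly L" "evz g \<zeta> = 0" "degree g = (LEAST n. ?P n)" by blast
  have "\<forall>g'. g' dvd fpoly L \<and> evz g' \<zeta> = 0 \<longrightarrow> degree g \<le> degree g'"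
  proof (intro allI impI)
    fix g' assume "g' dvd fpoly L \<and> evz g' \<zeta> = 0"
    then have "?P (degree g')" by blast
    then show "degree g \<le> degree g'" unfolding g(3) by (rule Least_le)
  qed
  with g show ?thesis by blast
qed

lemma int_poly_to_bit_dvd:
  assumes "(G::int poly) dvd H"
  shows "(map_poly of_int G :: bit poly) dvd map_poly of_int H"
proof -
  obtain k where "H = G * k" using assms unfolding dvd_def by blast
  then have "(map_poly of_int H :: bit poly) = map_poly of_int G * map_poly of_int k"
    by (simp add: of_int_poly_hom.hom_mult)
  then show ?thesis by simp
qed

lemma rou_main:
  fixes \<zeta> :: complex and L :: nat
  assumes zL: "\<zeta> ^ L = 1" and oddL: "odd L"
  shows "(\<forall>r. evq r \<zeta> = 0 \<longrightarrow> evq r (\<zeta>^2) = 0) \<and>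
         (\<forall>p. evq p \<zeta> \<noteq> 0 \<longrightarrow> (\<exists>q. evq q \<zeta> * evq p \<zeta> = 1)) \<and>
         (\<forall>P. 1 \<noteq> 2 * evz P \<zeta>)"
proof -
  have L1: "L \<ge> 1" using oddL by presburger
  have fz: "evz (fpoly L) \<zeta> = 0" using zL by (simp add: evz_fpoly)
  obtain g where gdvd: "g dvd fpoly L" and g0: "evz g \<zeta> = 0"
    and gmin: "\<And>g'. g' dvd fpoly L \<Longrightarrow> evz g' \<zeta> = 0 \<Longrightarrow> degree g \<le> degree g'"
    using min_poly_ex[OF fz] by blast
  have fnz: "fpoly L \<noteq> 0" using fpoly_nz[OF L1] .
  have gnz: "g \<noteq> 0" using gdvd fnz by auto
  have gdeg: "degree g \<ge> 1"
  proof (rule ccontr)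
    assume "\<not> 1 \<le> degree g"
    then have "degree g = 0" by simp
    then have "g = [:Polynomial.coeff g 0:]" by (metis degree_0_id)
    then have "evz g \<zeta> = of_int (Polynomial.coeff g 0)" by (metis evz_const)
    then have "Polynomial.coeff g 0 = 0" using g0 by simp
    then show False using gnz \<open>g = [:Polynomial.coeff g 0:]\<close> by simp
  qed
  obtain c G where cG: "rat_to_normalized_int_poly (of_int_poly g) = (c, G)" by force
  have gc: "(of_int_poly g :: rat poly) = Polynomial.smult c (of_int_poly G)"
    using rat_to_normalized_int_poly(1)[OF cG] .
  have cpos: "c > 0" using rat_to_normalized_int_poly(2)[OF cG] .
  have Gdeg: "degree G = degree g" using rat_to_normalized_int_poly(4)[OF cG] by simp
  have K1: "\<And>p. (of_int_poly g :: rat poly) dvd of_int_poly p \<Longrightarrow> G dvd p"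
  proof -
    fix p assume "(of_int_poly g :: rat poly) dvd of_int_poly p"
    then obtain h where h: "of_int_poly p = (of_int_poly g :: rat poly) * h" unfolding dvd_def by blast
    from rat_to_int_factor_explicit[OF h cG] obtain r where "p = G * Polynomial.smult (content p) r" by blast
    then show "G dvd p" by (metis dvd_triv_left)
  qed
  have evG: "\<And>z. evz g z = of_rat c * evz G z"
  proof -
    fix z
    have "evq (of_int_poly g) z = evq (Polynomial.smult c (of_int_poly G)) z" using gc by simp
    then show "evz g z = of_rat c * evz G z" by (simp add: evq_of_int)
  qed
  have K2: "\<And>d. d dvd (of_int_poly g :: rat poly) \<Longrightarrow> evq d \<zeta> = 0 \<Longrightarrow> degree g \<le> degree d"
  proof -
    fix d assume dd: "d dvd (of_int_poly g :: rat poly)" and d0: "evq d \<zeta> = 0"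
    obtain e where ge: "of_int_poly g = d * e" using dd unfolding dvd_def by blast
    obtain c' D where cD: "rat_to_normalized_int_poly d = (c', D)" by force
    from rat_to_int_factor_explicit[OF ge cD] obtain r where "g = D * Polynomial.smult (content g) r" by blast
    then have "D dvd g" by (metis dvd_triv_left)
    then have Df: "D dvd fpoly L" using gdvd by (rule dvd_trans)
    have dD: "d = Polynomial.smult c' (of_int_poly D)" using rat_to_normalized_int_poly(1)[OF cD] .
    have c'pos: "c' > 0" using rat_to_normalized_int_poly(2)[OF cD] .
    have "evq d \<zeta> = of_rat c' * evz D \<zeta>" using dD by (simp add: evq_of_int)
    then have "evz D \<zeta> = 0" using d0 c'pos by simp
    then have "degree g \<le> degree D" using gmin Df by blast
    then show "degree g \<le> degree d" using rat_to_normalized_int_poly(4)[OF cD] by simp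
  qed
  have K3: "\<And>r. evq r \<zeta> = 0 \<Longrightarrow> (of_int_poly g :: rat poly) dvd r"
  proof -
    fix r assume r0: "evq r \<zeta> = 0"
    define a where "a = (of_int_poly g :: rat poly)"
    define d where "d = gcd a r"
    have bez: "fst (bezout_coefficients a r) * a + snd (bezout_coefficients a r) * r = d"
      unfolding d_def by (rule bezout_coefficients_fst_snd)
    have a0: "evq a \<zeta> = 0" unfolding a_def by (simp add: evq_of_int g0)
    have "evq d \<zeta> = 0" using arg_cong[OF bez, of "\<lambda>x. evq x \<zeta>"] a0 r0 by simp
    moreover have "d dvd a" unfolding d_def by simp
    ultimately have dg: "degree g \<le> degree d" using K2 unfolding a_def by blast
    obtain e where ae: "a = d * e" using \<open>d dvd a\<close> unfolding dvd_def by blast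
    have anz: "a \<noteq> 0" unfolding a_def using gnz by simp
    then have dnz: "d \<noteq> 0" and enz: "e \<noteq> 0" using ae by auto
    have "degree a = degree d + degree e" using ae dnz enz by (simp add: degree_mult_eq)
    moreover have "degree a = degree g" unfolding a_def by simp
    ultimately have "degree e = 0" using dg by simp
    then have e: "e = [:Polynomial.coeff e 0:]" by (metis degree_0_id)
    then have ce: "Polynomial.coeff e 0 \<noteq> 0" using enz by auto
    have "d = Polynomial.smult (inverse (Polynomial.coeff e 0)) a"
      using ae e ce by (metis (no_types, lifting) mult.commute mult_smult_left nonzero_divide_eq_eq smult_smult divide_inverse_commute mult_1 one_poly_eq_simps(1) right_inverse smult_1_left smult_pCons smult_0_right)
    then have "a dvd d" by (metis dvd_refl dvd_smult)
    moreover have "d dvd r" unfolding d_def by simp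
    ultimately show "(of_int_poly g :: rat poly) dvd r" unfolding a_def by (rule dvd_trans)
  qed
  have fG: "G dvd fpoly L"
  proof -
    obtain k where "fpoly L = g * k" using gdvd unfolding dvd_def by blast
    then have "(of_int_poly (fpoly L) :: rat poly) = of_int_poly g * of_int_poly k"
      by (simp add: of_int_poly_hom.hom_mult)
    then show ?thesis using K1 by (metis dvd_triv_left)
  qed
  obtain H where fGH: "fpoly L = G * H" using fG unfolding dvd_def by blast
  have leadG: "lead_coeff G = 1 \<or> lead_coeff G = -1"
  proof -
    have "lead_coeff G * lead_coeff H = 1" using fGH fpoly_lead[OF L1] by (metis lead_coeff_mult)
    then show ?thesis using zmult_eq_1_iff by blast
  qed
  have mGdeg: "degree (map_poly of_int G :: bit poly) = degree G"
  proof (rule map_poly_degree_eq)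
    show "(of_int (lead_coeff G) :: bit) \<noteq> 0" using leadG by auto
  qed
  have X2: "evz [:0,0,1:] z = z^2" for z by (simp add: evz_pCons power2_eq_square)
  have K4: "evz G (\<zeta>^2) = 0"
  proof (rule ccontr)
    assume ne: "evz G (\<zeta>^2) \<noteq> 0"
    have "(\<zeta>^2)^L = 1" using zL by (metis power_mult mult.commute power_one)
    then have "evz (fpoly L) (\<zeta>^2) = 0" by (simp add: evz_fpoly)
    then have "evz G (\<zeta>^2) * evz H (\<zeta>^2) = 0" using fGH by simp
    then have H0: "evz H (\<zeta>^2) = 0" using ne by simp
    define H2 where "H2 = pcompose H [:0,0,1:]"
    have "evz H2 \<zeta> = 0" unfolding H2_def by (simp only: evz_pcompose X2 H0)
    then have "evq (of_int_poly H2) \<zeta> = 0" by (simp add: evq_of_int)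
    then have "G dvd H2" using K1 K3 by blast
    then have d1: "(map_poly of_int G :: bit poly) dvd map_poly of_int H2" by (rule int_poly_to_bit_dvd)
    have "(map_poly of_int H2 :: bit poly) = pcompose (map_poly of_int H) [:0,0,1:]"
      unfolding H2_def by (simp add: of_int_hom.map_poly_pcompose)
    also have "... = (map_poly of_int H)^2" by (rule bit_frob)
    finally have d2: "(map_poly of_int G :: bit poly) dvd (map_poly of_int H)^2" using d1 by simp
    have "(map_poly of_int G :: bit poly) * map_poly of_int H = map_poly of_int (fpoly L)"
      using fGH by (simp add: of_int_poly_hom.hom_mult)
    also have "... = Polynomial.monom 1 L - 1" by (simp add: fpoly_def of_int_poly_hom.hom_minus)
    also have "... = Polynomial.monom 1 L + 1"
    proof -
      have "(1::bit poly) + 1 = 0" by (rule bit_double)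
      have "-(1::bit poly) = 1" by (rule bit_neg)
      then show ?thesis by simp
    qed
    finally have ab: "(map_poly of_int G :: bit poly) * map_poly of_int H = Polynomial.monom 1 L + 1" .
    show False using bit_no_sq[OF ab oddL d2] mGdeg Gdeg gdeg by simp
  qed
  have FL: "\<forall>r. evq r \<zeta> = 0 \<longrightarrow> evq r (\<zeta>^2) = 0"
  proof (intro allI impI)
    fix r assume "evq r \<zeta> = 0"
    then obtain k where "r = (of_int_poly g :: rat poly) * k" using K3 unfolding dvd_def by blast
    then have "evq r (\<zeta>^2) = evz g (\<zeta>^2) * evq k (\<zeta>^2)" by (simp add: evq_of_int)
    then show "evq r (\<zeta>^2) = 0" using evG K4 by simp
  qed
  have INV: "\<forall>p. evq p \<zeta> \<noteq> 0 \<longrightarrow> (\<exists>q. evq q \<zeta> * evq p \<zeta> = 1)"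
  proof (intro allI impI)
    fix p assume p0: "evq p \<zeta> \<noteq> 0"
    define a where "a = (of_int_poly g :: rat poly)"
    define d where "d = gcd a p"
    have bez: "fst (bezout_coefficients a p) * a + snd (bezout_coefficients a p) * p = d"
      unfolding d_def by (rule bezout_coefficients_fst_snd)
    have a0: "evq a \<zeta> = 0" unfolding a_def by (simp add: evq_of_int g0)
    have dnz0: "evq d \<zeta> \<noteq> 0"
    proof
      assume "evq d \<zeta> = 0"
      then have "a dvd d" using K3 unfolding a_def by blast
      moreover have "d dvd p" unfolding d_def by simp
      ultimately have "a dvd p" by (rule dvd_trans)
      then obtain k where "p = a * k" unfolding dvd_def by blast
      then have "evq p \<zeta> = 0" using a0 by simp
      then show False using p0 by simp
    qed
    have "d dvd a" unfolding d_def by simp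
    then obtain e where ae: "a = d * e" unfolding dvd_def by blast
    have anz: "a \<noteq> 0" unfolding a_def using gnz by simp
    then have dnz: "d \<noteq> 0" and enz: "e \<noteq> 0" using ae by auto
    have "evq e \<zeta> = 0" using a0 ae dnz0 by simp
    moreover have "e dvd a" using ae by simp
    ultimately have eg: "degree g \<le> degree e" using K2 unfolding a_def by blast
    have "degree a = degree d + degree e" using ae dnz enz by (simp add: degree_mult_eq)
    moreover have "degree a = degree g" unfolding a_def by simp
    ultimately have "degree d = 0" using eg by simp
    then have dc: "d = [:Polynomial.coeff d 0:]" by (metis degree_0_id)
    then have cd: "Polynomial.coeff d 0 \<noteq> 0" using dnz by auto
    define q where "q = Polynomial.smult (inverse (Polynomial.coeff d 0)) (snd (bezout_coefficients a p))"
    have "evq d \<zeta> = evq (snd (bezout_coefficients a p)) \<zeta> * evq p \<zeta>"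
      using arg_cong[OF bez, of "\<lambda>x. evq x \<zeta>"] a0 by simp
    moreover have "evq d \<zeta> = of_rat (Polynomial.coeff d 0)" using dc by (metis evq_const)
    ultimately have e1: "evq (snd (bezout_coefficients a p)) \<zeta> * evq p \<zeta> = of_rat (Polynomial.coeff d 0)"
      by simp
    have "evq q \<zeta> * evq p \<zeta> = of_rat (inverse (Polynomial.coeff d 0)) * (evq (snd (bezout_coefficients a p)) \<zeta> * evq p \<zeta>)"
      unfolding q_def evq_smult by (simp only: mult.assoc)
    also have "... = of_rat (inverse (Polynomial.coeff d 0)) * of_rat (Polynomial.coeff d 0)"
      by (simp only: e1)
    also have "... = 1" using cd by (simp add: of_rat_mult[symmetric])
    finally have "evq q \<zeta> * evq p \<zeta> = 1" .
    then show "\<exists>q. evq q \<zeta> * evq p \<zeta> = 1" by blast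
  qed
  have HALF: "\<forall>P. 1 \<noteq> 2 * evz P \<zeta>"
  proof (intro allI notI)
    fix P assume h: "1 = 2 * evz P \<zeta>"
    define r where "r = Polynomial.smult 2 P - 1"
    have "evz r \<zeta> = 2 * evz P \<zeta> - 1" unfolding r_def by simp
    then have "evz r \<zeta> = 0" using h by simp
    then have "evq (of_int_poly r) \<zeta> = 0" by (simp add: evq_of_int)
    then have "G dvd r" using K1 K3 by blast
    then have d1: "(map_poly of_int G :: bit poly) dvd map_poly of_int r" by (rule int_poly_to_bit_dvd)
    have m2: "(map_poly of_int (Polynomial.smult 2 P) :: bit poly) = Polynomial.smult (of_int 2) (map_poly of_int P)"
      by (rule of_int_hom.map_poly_hom_smult)
    have o2: "(of_int 2 :: bit) = 0" by (simp only: of_int_numeral bit_numeral_even)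
    have "(map_poly of_int r :: bit poly) = map_poly of_int (Polynomial.smult 2 P) - map_poly of_int 1"
      unfolding r_def by (rule of_int_poly_hom.hom_minus)
    also have "... = - 1" unfolding m2 o2 by (simp only: smult_0_left of_int_poly_hom.hom_one diff_0)
    also have "... = 1" by (rule bit_neg)
    finally have eqr: "(map_poly of_int r :: bit poly) = 1" .
    have u: "(map_poly of_int G :: bit poly) dvd 1" using d1 unfolding eqr .
    have dg1: "degree (map_poly of_int G :: bit poly) \<ge> 1" using mGdeg Gdeg gdeg by linarith
    then have nz: "(map_poly of_int G :: bit poly) \<noteq> 0" by (metis degree_0 not_one_le_zero)
    have "degree (map_poly of_int G :: bit poly) = 0" using is_unit_iff_degree[OF nz] u by blast
    then show False using dg1 by linarith
  qed
  show ?thesis using FL INV HALF by blast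
qed

definition zr :: "nat \<Rightarrow> complex" where "zr N = cis (2 * pi / real N)"

lemma zr_pow: "N > 0 \<Longrightarrow> zr N ^ N = 1"
proof -
  assume N: "N > 0"
  have "zr N ^ N = cis (real N * (2 * pi / real N))" unfolding zr_def by (rule Complex.DeMoivre)
  also have "... = 1" using N by simp
  finally show ?thesis .
qed

lemma zr_mult: "N > 0 \<Longrightarrow> M > 0 \<Longrightarrow> zr N = zr (N*M) ^ M"
proof -
  assume N: "N > 0" and M: "M > 0"
  have "zr (N*M) ^ M = cis (real M * (2 * pi / real (N*M)))" unfolding zr_def by (rule Complex.DeMoivre)
  also have "real M * (2 * pi / real (N*M)) = 2 * pi / real N" using N M by (simp add: field_simps)
  finally show ?thesis by (simp add: zr_def)
qed

definition QZ :: "nat \<Rightarrow> complex set" where "QZ N = range (\<lambda>p. evq p (zr N))"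

lemma evq_zero[simp]: "evq 0 z = 0" by (simp add: evq_def)

lemma evq_X: "evq [:0,1:] z = z"
  by (simp add: evq_pCons)

lemma evq_in_QZ: "evq p (zr N) \<in> QZ N" by (simp add: QZ_def)

lemma QZ_sub: "N > 0 \<Longrightarrow> M > 0 \<Longrightarrow> QZ N \<subseteq> QZ (N*M)"
proof
  fix x assume N: "N > 0" and M: "M > 0" and "x \<in> QZ N"
  then obtain p where x: "x = evq p (zr N)" by (auto simp: QZ_def)
  have "x = evq (pcompose p (Polynomial.monom 1 M)) (zr (N*M))"
    unfolding x evq_pcompose evq_monom using zr_mult[OF N M] by simp
  then show "x \<in> QZ (N*M)" by (simp add: QZ_def)
qed

lemma odd_pos: "odd (N::nat) \<Longrightarrow> N > 0" by presburger

lemma rou_zr: "odd N \<Longrightarrow> (\<forall>r. evq r (zr N) = 0 \<longrightarrow> evq r (zr N^2) = 0) \<and>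
         (\<forall>p. evq p (zr N) \<noteq> 0 \<longrightarrow> (\<exists>q. evq q (zr N) * evq p (zr N) = 1)) \<and>
         (\<forall>P. 1 \<noteq> 2 * evz P (zr N))"
  by (rule rou_main[OF zr_pow[OF odd_pos]])

lemma QZ_subfield: "odd N \<Longrightarrow> is_subfield (QZ N)"
proof -
  assume N: "odd N"
  have inv: "\<And>x. x \<in> QZ N \<Longrightarrow> x \<noteq> 0 \<Longrightarrow> inverse x \<in> QZ N"
  proof -
    fix x assume "x \<in> QZ N" "x \<noteq> 0"
    then obtain p where x: "x = evq p (zr N)" by (auto simp: QZ_def)
    then obtain q where "evq q (zr N) * x = 1" using rou_zr[OF N] \<open>x \<noteq> 0\<close> by blast
    then have "inverse x = evq q (zr N)" by (metis inverse_unique mult.commute)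
    then show "inverse x \<in> QZ N" by (simp add: QZ_def)
  qed
  show ?thesis unfolding is_subfield_def
  proof (intro conjI ballI impI)
    show "0 \<in> QZ N" using evq_in_QZ[of 0 N] by simp
    show "1 \<in> QZ N" using evq_in_QZ[of 1 N] by simp
  next
    fix x y assume "x \<in> QZ N" "y \<in> QZ N"
    then obtain p q where x: "x = evq p (zr N)" and y: "y = evq q (zr N)" by (auto simp: QZ_def)
    show "x + y \<in> QZ N" using evq_in_QZ[of "p+q" N] x y by simp
    show "x - y \<in> QZ N" using evq_in_QZ[of "p-q" N] x y by simp
    show "x * y \<in> QZ N" using evq_in_QZ[of "p*q" N] x y by simp
  next
    fix x assume "x \<in> QZ N" "x \<noteq> 0" then show "inverse x \<in> QZ N" by (rule inv)
  qed
qed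

lemma subfield_nat: "is_subfield F \<Longrightarrow> of_nat n \<in> F"
  by (induction n) (auto simp: is_subfield_def)

lemma subfield_int: "is_subfield F \<Longrightarrow> of_int n \<in> F"
proof -
  assume F: "is_subfield F"
  show ?thesis
  proof (cases "n \<ge> 0")
    case True
    then have "of_int n = (of_nat (nat n) :: complex)" by simp
    then show ?thesis using subfield_nat[OF F] by simp
  next
    case False
    then have "of_int n = 0 - (of_nat (nat (-n)) :: complex)" by simp
    moreover have "(0::complex) \<in> F" using F by (simp add: is_subfield_def)
    ultimately show ?thesis using subfield_nat[OF F, of "nat (-n)"] F unfolding is_subfield_def by metis
  qed
qed

lemma subfield_rat: "is_subfield F \<Longrightarrow> of_rat q \<in> F"
proof -
  assume F: "is_subfield F"
  obtain a b where ab: "quotient_of q = (a, b)" by force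
  have q: "q = of_int a / of_int b" using quotient_of_div[OF ab] .
  have b: "b > 0" using quotient_of_denom_pos[OF ab] .
  have "of_rat q = (of_int a :: complex) * inverse (of_int b)"
    unfolding q by (simp add: of_rat_divide divide_inverse of_rat_mult of_rat_inverse)
  moreover have "inverse (of_int b :: complex) \<in> F" using subfield_int[OF F, of b] b F
    unfolding is_subfield_def by simp
  ultimately show ?thesis using subfield_int[OF F, of a] F unfolding is_subfield_def by metis
qed

lemma subfield_evq: "is_subfield F \<Longrightarrow> z \<in> F \<Longrightarrow> evq p z \<in> F"
proof (induction p)
  case 0
  then show ?case by (simp add: evq_def is_subfield_def)
next
  case (pCons a p)
  then have "evq p z \<in> F" by simp
  then show ?case using pCons.prems subfield_rat[OF pCons.prems(1), of a]
    unfolding evq_pCons is_subfield_def by metis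
qed

lemma cyc_field_eq: "odd N \<Longrightarrow> cyc_field N = QZ N"
proof
  assume N: "odd N"
  have "zr N \<in> QZ N" using evq_in_QZ[of "[:0,1:]" N] unfolding evq_X .
  then show "cyc_field N \<subseteq> QZ N" unfolding cyc_field_def using QZ_subfield[OF N]
    by (intro Inter_lower) (simp add: zr_def)
  show "QZ N \<subseteq> cyc_field N"
  proof
    fix x assume "x \<in> QZ N"
    then obtain p where x: "x = evq p (zr N)" by (auto simp: QZ_def)
    show "x \<in> cyc_field N" unfolding cyc_field_def x
      by (intro InterI) (auto intro: subfield_evq simp: zr_def)
  qed
qed

lemma Kprime_iff: "x \<in> Kprime \<longleftrightarrow> (\<exists>N p. odd N \<and> x = evq p (zr N))"
proof
  assume "x \<in> Kprime"
  then obtain m where m: "odd m" "x \<in> cyc_field m" unfolding Kprime_def by blast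
  then have "x \<in> QZ m" using cyc_field_eq by blast
  then show "\<exists>N p. odd N \<and> x = evq p (zr N)" using m(1) unfolding QZ_def by blast
next
  assume "\<exists>N p. odd N \<and> x = evq p (zr N)"
  then obtain N p where "odd N" "x = evq p (zr N)" by blast
  then have "x \<in> cyc_field N" using cyc_field_eq evq_in_QZ by blast
  then show "x \<in> Kprime" unfolding Kprime_def using \<open>odd N\<close> by blast
qed

lemma Kprime_two:
  assumes "x \<in> Kprime" "y \<in> Kprime"
  shows "\<exists>N p q. odd N \<and> x = evq p (zr N) \<and> y = evq q (zr N)"
proof -
  obtain N1 p1 where 1: "odd N1" "x = evq p1 (zr N1)" using assms(1) Kprime_iff by blast
  obtain N2 p2 where 2: "odd N2" "y = evq p2 (zr N2)" using assms(2) Kprime_iff by blast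
  have "x \<in> QZ (N1*N2)" using QZ_sub[OF odd_pos[OF 1(1)] odd_pos[OF 2(1)]] 1 evq_in_QZ by blast
  moreover have "y \<in> QZ (N2*N1)" using QZ_sub[OF odd_pos[OF 2(1)] odd_pos[OF 1(1)]] 2 evq_in_QZ by blast
  moreover have "odd (N1*N2)" using 1 2 by simp
  ultimately show ?thesis unfolding QZ_def by (metis (no_types, lifting) imageE mult.commute)
qed

lemma Kprime_add: "x \<in> Kprime \<Longrightarrow> y \<in> Kprime \<Longrightarrow> x + y \<in> Kprime"
  using Kprime_two[of x y] Kprime_iff by (metis evq_add)
lemma Kprime_diff: "x \<in> Kprime \<Longrightarrow> y \<in> Kprime \<Longrightarrow> x - y \<in> Kprime"
  using Kprime_two[of x y] Kprime_iff by (metis evq_diff)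
lemma Kprime_mult: "x \<in> Kprime \<Longrightarrow> y \<in> Kprime \<Longrightarrow> x * y \<in> Kprime"
  using Kprime_two[of x y] Kprime_iff by (metis evq_mult)
lemma Kprime_rat: "of_rat q \<in> Kprime"
  using Kprime_iff[of "of_rat q"] by (metis evq_const odd_one)
lemma Kprime_inverse: "x \<in> Kprime \<Longrightarrow> inverse x \<in> Kprime"
proof -
  assume "x \<in> Kprime"
  then obtain N p where N: "odd N" and x: "x = evq p (zr N)" using Kprime_iff by blast
  then have "x \<in> QZ N" by (simp add: evq_in_QZ)
  then have "inverse x \<in> QZ N" using QZ_subfield[OF N] unfolding is_subfield_def
    by (cases "x = 0") auto
  then show ?thesis using N Kprime_iff by (auto simp: QZ_def)
qed
lemma Kprime_divide: "x \<in> Kprime \<Longrightarrow> y \<in> Kprime \<Longrightarrow> x / y \<in> Kprime"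
  by (simp add: divide_inverse Kprime_mult Kprime_inverse)

lemma FLz: "odd L \<Longrightarrow> evq r (zr L) = 0 \<Longrightarrow> evq r (zr L ^ 2) = 0"
  using rou_zr by blast

lemma pow_swap: "((a::complex)^2)^M = (a^M)^2"
  by (metis power_mult mult.commute)

lemma evq_pcomp_monom: "evq (pcompose p (Polynomial.monom 1 M)) w = evq p (w^M)"
  by (simp add: evq_pcompose evq_monom)

lemma frob_wd:
  assumes N: "odd N" and M: "odd M" and e: "evq p (zr N) = evq q (zr M)"
  shows "evq p (zr N ^ 2) = evq q (zr M ^ 2)"
proof -
  define L where "L = N * M"
  have L: "odd L" unfolding L_def using N M by simp
  have zN: "zr N = zr L ^ M" unfolding L_def using zr_mult[OF odd_pos[OF N] odd_pos[OF M]] .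
  have zM: "zr M = zr L ^ N" unfolding L_def using zr_mult[OF odd_pos[OF M] odd_pos[OF N]] by (simp add: mult.commute)
  define r where "r = pcompose p (Polynomial.monom 1 M) - pcompose q (Polynomial.monom 1 N)"
  have "evq r (zr L) = evq p (zr N) - evq q (zr M)"
    unfolding r_def evq_diff evq_pcomp_monom zN zM ..
  then have "evq r (zr L) = 0" using e by simp
  then have "evq r (zr L ^ 2) = 0" by (rule FLz[OF L])
  then have "evq p ((zr L ^ 2)^M) = evq q ((zr L ^ 2)^N)"
    unfolding r_def evq_diff evq_pcomp_monom by simp
  then show ?thesis unfolding pow_swap zN zM .
qed

definition frob :: "complex \<Rightarrow> complex" where
  "frob x = (if x \<in> Kprime then (SOME y. \<exists>N p. odd N \<and> x = evq p (zr N) \<and> y = evq p (zr N ^ 2)) else x)"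

lemma evq_Kprime: "odd N \<Longrightarrow> evq p (zr N) \<in> Kprime"
  using Kprime_iff by blast

lemma frob_evq: "odd N \<Longrightarrow> frob (evq p (zr N)) = evq p (zr N ^ 2)"
proof -
  assume N: "odd N"
  let ?x = "evq p (zr N)"
  let ?P = "\<lambda>y. \<exists>N p. odd N \<and> ?x = evq p (zr N) \<and> y = evq p (zr N ^ 2)"
  have "?P (evq p (zr N ^ 2))" using N by blast
  then have "?P (SOME y. ?P y)" by (rule someI)
  then obtain N' p' where N': "odd N'" "?x = evq p' (zr N')" "(SOME y. ?P y) = evq p' (zr N' ^ 2)" by blast
  have "evq p (zr N ^ 2) = evq p' (zr N' ^ 2)" using frob_wd[OF N N'(1) N'(2)] .
  then show ?thesis unfolding frob_def using evq_Kprime[OF N] N'(3) by simp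
qed

lemma evq_sq: "evq [:0,0,1:] z = z^2"
  by (simp add: evq_pCons power2_eq_square)

lemma frob_Kprime: "x \<in> Kprime \<Longrightarrow> frob x \<in> Kprime"
proof -
  assume "x \<in> Kprime"
  then obtain N p where N: "odd N" and x: "x = evq p (zr N)" using Kprime_iff by blast
  have "frob x = evq (pcompose p [:0,0,1:]) (zr N)"
    unfolding x frob_evq[OF N] evq_pcompose evq_sq ..
  then show ?thesis using evq_Kprime[OF N] by simp
qed

lemma frob_add: "x \<in> Kprime \<Longrightarrow> y \<in> Kprime \<Longrightarrow> frob (x + y) = frob x + frob y"
proof -
  assume "x \<in> Kprime" "y \<in> Kprime"
  then obtain N p q where N: "odd N" and x: "x = evq p (zr N)" and y: "y = evq q (zr N)"
    using Kprime_two by blast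
  have "frob (x + y) = frob (evq (p + q) (zr N))" using x y by simp
  also have "... = evq (p + q) (zr N ^ 2)" by (rule frob_evq[OF N])
  finally show ?thesis using x y frob_evq[OF N] by simp
qed

lemma frob_diff: "x \<in> Kprime \<Longrightarrow> y \<in> Kprime \<Longrightarrow> frob (x - y) = frob x - frob y"
proof -
  assume "x \<in> Kprime" "y \<in> Kprime"
  then obtain N p q where N: "odd N" and x: "x = evq p (zr N)" and y: "y = evq q (zr N)"
    using Kprime_two by blast
  have "frob (x - y) = frob (evq (p - q) (zr N))" using x y by simp
  also have "... = evq (p - q) (zr N ^ 2)" by (rule frob_evq[OF N])
  finally show ?thesis using x y frob_evq[OF N] by simp
qed

lemma frob_mult: "x \<in> Kprime \<Longrightarrow> y \<in> Kprime \<Longrightarrow> frob (x * y) = frob x * frob y"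
proof -
  assume "x \<in> Kprime" "y \<in> Kprime"
  then obtain N p q where N: "odd N" and x: "x = evq p (zr N)" and y: "y = evq q (zr N)"
    using Kprime_two by blast
  have "frob (x * y) = frob (evq (p * q) (zr N))" using x y by simp
  also have "... = evq (p * q) (zr N ^ 2)" by (rule frob_evq[OF N])
  finally show ?thesis using x y frob_evq[OF N] by simp
qed

lemma frob_rat: "frob (of_rat q) = of_rat q"
  using frob_evq[of 1 "[:q:]"] by simp

lemma frob_int: "frob (of_int n) = of_int n"
  using frob_rat[of "of_int n"] by simp

lemma frob_nz: "x \<in> Kprime \<Longrightarrow> x \<noteq> 0 \<Longrightarrow> frob x \<noteq> 0"
proof -
  assume x: "x \<in> Kprime" "x \<noteq> 0"
  have "inverse x \<in> Kprime" using x(1) by (rule Kprime_inverse)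
  then have "frob (x * inverse x) = frob x * frob (inverse x)" using frob_mult x by blast
  moreover have "frob (x * inverse x) = 1" using x frob_rat[of 1] by simp
  ultimately show ?thesis by auto
qed

lemma frob_divide: "x \<in> Kprime \<Longrightarrow> y \<in> Kprime \<Longrightarrow> y \<noteq> 0 \<Longrightarrow> frob (x / y) = frob x / frob y"
proof -
  assume x: "x \<in> Kprime" and y: "y \<in> Kprime" "y \<noteq> 0"
  have "x / y \<in> Kprime" using x y by (simp add: Kprime_divide)
  then have "frob (x / y * y) = frob (x / y) * frob y" using frob_mult y by blast
  moreover have "x / y * y = x" using y by simp
  ultimately show ?thesis using frob_nz[OF y] by (simp add: field_simps)
qed

lemma frob_surj: "y \<in> Kprime \<Longrightarrow> \<exists>x\<in>Kprime. frob x = y"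
proof -
  assume "y \<in> Kprime"
  then obtain N p where N: "odd N" and y: "y = evq p (zr N)" using Kprime_iff by blast
  define k where "k = (N + 1) div 2"
  have k2: "2 * k = N + 1" unfolding k_def using N by presburger
  define x where "x = evq (pcompose p (Polynomial.monom 1 k)) (zr N)"
  have "frob x = evq (pcompose p (Polynomial.monom 1 k)) (zr N ^ 2)" unfolding x_def by (rule frob_evq[OF N])
  also have "... = evq p ((zr N ^ 2) ^ k)" by (rule evq_pcomp_monom)
  also have "(zr N ^ 2) ^ k = zr N" using k2 zr_pow[OF odd_pos[OF N]]
    by (metis power_mult power_add power_one_right mult_1)
  finally have "frob x = y" using y by simp
  moreover have "x \<in> Kprime" unfolding x_def using evq_Kprime[OF N] .
  ultimately show ?thesis by blast
qed

lemma frob_galK: "frob \<in> galK"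
proof -
  have inj: "inj_on frob Kprime"
  proof (rule inj_onI)
    fix x y assume x: "x \<in> Kprime" and y: "y \<in> Kprime" and e: "frob x = frob y"
    have "frob (x - y) = 0" using frob_diff[OF x y] e by simp
    moreover have "x - y \<in> Kprime" using x y by (rule Kprime_diff)
    ultimately have "x - y = 0" using frob_nz by blast
    then show "x = y" by simp
  qed
  have img: "frob ` Kprime = Kprime"
    using frob_Kprime frob_surj by blast
  have "bij_betw frob Kprime Kprime" using inj img by (simp add: bij_betw_def)
  moreover have "\<forall>x\<in>Kprime. \<forall>y\<in>Kprime. frob (x + y) = frob x + frob y \<and> frob (x * y) = frob x * frob y"
    using frob_add frob_mult by blast
  moreover have "\<forall>x. x \<notin> Kprime \<longrightarrow> frob x = x" by (simp add: frob_def)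
  ultimately show ?thesis unfolding galK_def by blast
qed

lemma alg_key:
  fixes X Y Z a b c :: complex
  assumes hx: "X^2 - X = 2*a" and hy: "Y^2 - Y = 2*b" and hz: "Z^2 - Z = 2*c"
    and s: "X^2 + Y^2 + Z^2 = 0"
  shows "X = 2 * (X^2 * ((c*(c+Z)) - (a*(a+X)) - (b*(b+Y))) - X^2*Y^2 - 2*(a*(a+X)) - 2*(a*(a+X))*Y^2 - a)"
proof -
  have hX: "X^2 = X + 2*a" using hx by (simp add: diff_eq_eq add.commute)
  then have hXX: "X * X = X + 2*a" by (simp add: power2_eq_square)
  have hY: "Y^2 = Y + 2*b" using hy by (simp add: diff_eq_eq add.commute)
  then have hYY: "Y * Y = Y + 2*b" by (simp add: power2_eq_square)
  have hZ: "Z^2 = Z + 2*c" using hz by (simp add: diff_eq_eq add.commute)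
  then have hZZ: "Z * Z = Z + 2*c" by (simp add: power2_eq_square)
  define P where "P = X^2"
  define Q where "Q = Y^2"
  define T where "T = Z^2"
  define \<alpha> where "\<alpha> = a*(a+X)"
  define \<beta> where "\<beta> = b*(b+Y)"
  define \<gamma> where "\<gamma> = c*(c+Z)"
  define \<delta> where "\<delta> = \<gamma> - \<alpha> - \<beta>"
  have P2: "P^2 = P + 4*\<alpha>" unfolding P_def \<alpha>_def hX by (simp add: power2_eq_square algebra_simps hXX)
  have Q2: "Q^2 = Q + 4*\<beta>" unfolding Q_def \<beta>_def hY by (simp add: power2_eq_square algebra_simps hYY)
  have T2: "T^2 = T + 4*\<gamma>" unfolding T_def \<gamma>_def hZ by (simp add: power2_eq_square algebra_simps hZZ)
  have "(P + Q) + T = 0" unfolding P_def Q_def T_def using s by simp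
  then have T: "T = -(P+Q)" by (simp add: add_eq_0_iff)
  have "T^2 = (P+Q)^2" unfolding T by (simp add: power2_eq_square algebra_simps)
  also have "... = P^2 + 2*(P*Q) + Q^2" by (simp add: power2_eq_square algebra_simps)
  finally have E: "T + 4*\<gamma> = P + 4*\<alpha> + 2*(P*Q) + (Q + 4*\<beta>)" using T2 P2 Q2 by simp
  have "2*(P+Q+P*Q - 2*\<delta>) = (P + 4*\<alpha> + 2*(P*Q) + (Q + 4*\<beta>)) - (T + 4*\<gamma>)"
    unfolding \<delta>_def T by (simp add: algebra_simps)
  then have "2*(P+Q+P*Q - 2*\<delta>) = 0" using E by simp
  then have d0: "P+Q+P*Q - 2*\<delta> = 0" by (metis mult_eq_0_iff zero_neq_numeral)
  have "P - 2*(P*\<delta> - P*Q - 2*\<alpha> - 2*\<alpha>*Q) = P*(P+Q+P*Q - 2*\<delta>) - (P^2 - P - 4*\<alpha>) - (P^2 - P - 4*\<alpha>)*Q"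
    by (simp add: power2_eq_square algebra_simps)
  also have "... = 0" using d0 P2 by simp
  finally have "P = 2*(P*\<delta> - P*Q - 2*\<alpha> - 2*\<alpha>*Q)" by simp
  then have "X = 2*(P*\<delta> - P*Q - 2*\<alpha> - 2*\<alpha>*Q - a)" using hX unfolding P_def by (simp add: algebra_simps)
  then show ?thesis unfolding P_def Q_def \<delta>_def \<alpha>_def \<beta>_def \<gamma>_def by simp
qed

definition ZZ :: "nat \<Rightarrow> complex set" where "ZZ N = range (\<lambda>P. evz P (zr N))"

lemma evz_in_ZZ: "evz P (zr N) \<in> ZZ N" by (simp add: ZZ_def)

lemma ZZ_add: "x \<in> ZZ N \<Longrightarrow> y \<in> ZZ N \<Longrightarrow> x + y \<in> ZZ N"
proof -
  assume "x \<in> ZZ N" "y \<in> ZZ N"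
  then obtain P Q where "x = evz P (zr N)" "y = evz Q (zr N)" unfolding ZZ_def by blast
  then have "x + y = evz (P + Q) (zr N)" by simp
  then show ?thesis by (simp only: evz_in_ZZ)
qed
lemma ZZ_diff: "x \<in> ZZ N \<Longrightarrow> y \<in> ZZ N \<Longrightarrow> x - y \<in> ZZ N"
proof -
  assume "x \<in> ZZ N" "y \<in> ZZ N"
  then obtain P Q where "x = evz P (zr N)" "y = evz Q (zr N)" unfolding ZZ_def by blast
  then have "x - y = evz (P - Q) (zr N)" by simp
  then show ?thesis by (simp only: evz_in_ZZ)
qed
lemma ZZ_mult: "x \<in> ZZ N \<Longrightarrow> y \<in> ZZ N \<Longrightarrow> x * y \<in> ZZ N"
proof -
  assume "x \<in> ZZ N" "y \<in> ZZ N"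
  then obtain P Q where "x = evz P (zr N)" "y = evz Q (zr N)" unfolding ZZ_def by blast
  then have "x * y = evz (P * Q) (zr N)" by simp
  then show ?thesis by (simp only: evz_in_ZZ)
qed
lemma ZZ_int: "of_int k \<in> ZZ N"
  using evz_in_ZZ[of "[:k:]" N] by simp
lemma ZZ_nat: "of_nat k \<in> ZZ N"
  using ZZ_int[of "int k" N] by simp

lemma congr2: "\<exists>W. (evz P z)^2 - evz P (z^2) = 2 * evz W z"
proof (induction P)
  case 0
  then show ?case by (intro exI[of _ 0]) (simp add: evz_def)
next
  case (pCons a P)
  then obtain W where W: "(evz P z)^2 - evz P (z^2) = 2 * evz W z" by blast
  define t where "t = (a * a - a) div 2"
  have t: "2 * t = a * a - a" unfolding t_def by simp
  define W' where "W' = [:t:] + Polynomial.smult a ([:0,1:] * P) + [:0,0,1:] * W"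
  have eW': "evz W' z = of_int t + of_int a * (z * evz P z) + z^2 * evz W z"
    unfolding W'_def by (simp add: evz_pCons power2_eq_square algebra_simps)
  have t': "2 * (of_int t :: complex) = of_int a * of_int a - of_int a"
    using arg_cong[OF t, of "of_int :: int \<Rightarrow> complex"] by simp
  have "(evz (pCons a P) z)^2 - evz (pCons a P) (z^2) = (of_int a + z * evz P z)^2 - (of_int a + z^2 * evz P (z^2))"
    by (simp add: evz_pCons)
  also have "... = 2 * evz W' z + (z^2 * ((evz P z)^2 - evz P (z^2) - 2 * evz W z) + (of_int a * of_int a - of_int a - 2 * of_int t))"
    unfolding eW' by (simp add: power2_eq_square algebra_simps)
  also have "... = 2 * evz W' z" using W t' by simp
  finally show ?case by blast
qed

lemma frob_evz: "odd N \<Longrightarrow> frob (evz P (zr N)) = evz P (zr N ^ 2)"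
  using frob_evq[of N "of_int_poly P"] by (simp add: evq_of_int)

lemma evz_Kprime: "odd N \<Longrightarrow> evz P (zr N) \<in> Kprime"
  using evq_Kprime[of N "of_int_poly P"] by (simp add: evq_of_int)

lemma ZZ_Kprime: "odd N \<Longrightarrow> x \<in> ZZ N \<Longrightarrow> x \<in> Kprime"
  unfolding ZZ_def using evz_Kprime by blast

lemma idem2:
  assumes N: "odd N" and x: "x \<in> ZZ N" and fx: "frob x = x \<or> frob x = - x"
  shows "\<exists>w\<in>ZZ N. x^2 - x = 2 * w"
proof -
  obtain P where xP: "x = evz P (zr N)" using x unfolding ZZ_def by blast
  obtain W where W: "x^2 - evz P (zr N ^ 2) = 2 * evz W (zr N)" using congr2[of P "zr N"] xP by blast
  have fx': "frob x = evz P (zr N ^ 2)" unfolding xP by (rule frob_evz[OF N])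
  show ?thesis
  proof (cases "frob x = x")
    case True
    then show ?thesis using W fx' evz_in_ZZ by metis
  next
    case False
    then have "frob x = - x" using fx by blast
    then have "x^2 - x = 2 * (evz W (zr N) - x)" using W fx' by (simp add: algebra_simps)
    moreover have "evz W (zr N) - x \<in> ZZ N" using x evz_in_ZZ ZZ_diff by blast
    ultimately show ?thesis by blast
  qed
qed

lemma alg_ZZ:
  assumes X: "X \<in> ZZ N" and Y: "Y \<in> ZZ N" and Z: "Z \<in> ZZ N"
    and hx: "\<exists>w\<in>ZZ N. X^2 - X = 2 * w" and hy: "\<exists>w\<in>ZZ N. Y^2 - Y = 2 * w" and hz: "\<exists>w\<in>ZZ N. Z^2 - Z = 2 * w"
    and s: "X^2 + Y^2 + Z^2 = 0"
  shows "\<exists>w\<in>ZZ N. X = 2 * w"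
proof -
  obtain a b c where a: "a \<in> ZZ N" "X^2 - X = 2*a" and b: "b \<in> ZZ N" "Y^2 - Y = 2*b"
    and c: "c \<in> ZZ N" "Z^2 - Z = 2*c" using hx hy hz by blast
  note k = alg_key[OF a(2) b(2) c(2) s]
  have two: "(2::complex) \<in> ZZ N" using ZZ_int[of 2 N] by simp
  have "X^2 * ((c*(c+Z)) - (a*(a+X)) - (b*(b+Y))) - X^2*Y^2 - 2*(a*(a+X)) - 2*(a*(a+X))*Y^2 - a \<in> ZZ N"
    using X Y Z a(1) b(1) c(1) two by (simp add: power2_eq_square ZZ_add ZZ_diff ZZ_mult)
  then show ?thesis using k by blast
qed

lemma frob_nat: "frob (of_nat n) = of_nat n"
  using frob_rat[of "of_nat n"] by simp

lemma Kprime_nat: "(of_nat n :: complex) \<in> Kprime"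
  using Kprime_rat[of "of_nat n"] by simp

lemma denom_ex: "\<exists>d r. d > 0 \<and> of_int d * evq p z = evz r z"
proof -
  obtain d r where dr: "rat_to_int_poly p = (d, r)" by force
  have p: "p = Polynomial.smult (inverse (rat_of_int d)) (of_int_poly r)" using rat_to_int_poly(1)[OF dr] .
  have d: "d > 0" using rat_to_int_poly(2)[OF dr] .
  have "evq p z = of_rat (inverse (rat_of_int d)) * evz r z" unfolding p by (simp add: evq_of_int)
  then have "of_int d * evq p z = evz r z" using d by (simp add: of_rat_inverse)
  then show ?thesis using d by blast
qed

lemma descent:
  assumes b: "b \<in> Kprime" and c: "c \<in> Kprime"
    and fb: "frob b = b \<or> frob b = - b" and fc: "frob c = c \<or> frob c = - c"
    and s: "1 + b^2 + c^2 = 0"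
  shows False
proof -
  obtain N p q where N: "odd N" and bp: "b = evq p (zr N)" and cq: "c = evq q (zr N)"
    using Kprime_two[OF b c] by blast
  obtain d1 r1 where d1: "d1 > 0" "of_int d1 * b = evz r1 (zr N)" using denom_ex bp by blast
  obtain d2 r2 where d2: "d2 > 0" "of_int d2 * c = evz r2 (zr N)" using denom_ex cq by blast
  define S where "S = {n::nat. n > 0 \<and> of_nat n * b \<in> ZZ N \<and> of_nat n * c \<in> ZZ N}"
  define n0 where "n0 = nat (d1 * d2)"
  have n0c: "(of_nat n0 :: complex) = of_int d1 * of_int d2" unfolding n0_def using d1 d2 by simp
  have "n0 \<in> S"
  proof -
    have "n0 > 0" unfolding n0_def using d1 d2 by simp
    moreover have "of_nat n0 * b = of_int d2 * evz r1 (zr N)" unfolding n0c d1(2)[symmetric] by simp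
    moreover have "of_nat n0 * c = of_int d1 * evz r2 (zr N)" unfolding n0c d2(2)[symmetric] by simp
    ultimately show ?thesis unfolding S_def using ZZ_mult ZZ_int evz_in_ZZ by auto
  qed
  define n where "n = (LEAST n. n \<in> S)"
  have nS: "n \<in> S" unfolding n_def using \<open>n0 \<in> S\<close> by (rule LeastI)
  have nmin: "\<And>m. m \<in> S \<Longrightarrow> n \<le> m" unfolding n_def by (rule Least_le)
  define X where "X = (of_nat n :: complex)"
  define B where "B = X * b"
  define C where "C = X * c"
  have npos: "n > 0" and BZ: "B \<in> ZZ N" and CZ: "C \<in> ZZ N" using nS unfolding S_def B_def C_def X_def by auto
  have XZ: "X \<in> ZZ N" unfolding X_def by (rule ZZ_nat)
  have fB: "frob B = B \<or> frob B = - B"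
  proof -
    have "frob B = X * frob b" unfolding B_def X_def using frob_mult[OF Kprime_nat b] frob_nat by simp
    then show ?thesis using fb unfolding B_def by auto
  qed
  have fC: "frob C = C \<or> frob C = - C"
  proof -
    have "frob C = X * frob c" unfolding C_def X_def using frob_mult[OF Kprime_nat c] frob_nat by simp
    then show ?thesis using fc unfolding C_def by auto
  qed
  have iB: "\<exists>w\<in>ZZ N. B^2 - B = 2 * w" by (rule idem2[OF N BZ fB])
  have iC: "\<exists>w\<in>ZZ N. C^2 - C = 2 * w" by (rule idem2[OF N CZ fC])
  have iX: "\<exists>w\<in>ZZ N. X^2 - X = 2 * w"
  proof -
    have ev: "even (n * (n - 1))" by (cases "even n") simp_all
    then obtain m where m: "n * (n - 1) = 2 * m" by blast
    have "X^2 - X = X * (X - 1)" by (simp add: power2_eq_square algebra_simps)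
    also have "X - 1 = of_nat (n - 1)" unfolding X_def using npos by (simp add: of_nat_diff)
    also have "X * of_nat (n - 1) = of_nat (n * (n - 1))" unfolding X_def by simp
    also have "... = 2 * of_nat m" unfolding m by simp
    finally show ?thesis using ZZ_nat by blast
  qed
  have sum: "X^2 + B^2 + C^2 = 0"
  proof -
    have "X^2 + B^2 + C^2 = X^2 * (1 + b^2 + c^2)" unfolding B_def C_def by (simp add: power2_eq_square algebra_simps)
    then show ?thesis using s by simp
  qed
  have sumB: "B^2 + X^2 + C^2 = 0" using sum by (simp add: algebra_simps)
  have sumC: "C^2 + X^2 + B^2 = 0" using sum by (simp add: algebra_simps)
  obtain wX where wX: "wX \<in> ZZ N" "X = 2 * wX" using alg_ZZ[OF XZ BZ CZ iX iB iC sum] by blast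
  obtain wB where wB: "wB \<in> ZZ N" "B = 2 * wB" using alg_ZZ[OF BZ XZ CZ iB iX iC sumB] by blast
  obtain wC where wC: "wC \<in> ZZ N" "C = 2 * wC" using alg_ZZ[OF CZ XZ BZ iC iX iB sumC] by blast
  show False
  proof (cases "even n")
    case True
    then obtain m where m: "n = 2 * m" by blast
    have mpos: "m > 0" using npos m by simp
    have "of_nat m * b = wB" using wB(2) unfolding B_def X_def m by simp
    moreover have "of_nat m * c = wC" using wC(2) unfolding C_def X_def m by simp
    ultimately have "m \<in> S" unfolding S_def using mpos wB(1) wC(1) by simp
    then have "n \<le> m" by (rule nmin)
    then show False using m mpos by simp
  next
    case False
    then obtain k where k: "n = 2 * k + 1" using oddE by blast
    have "1 = X - 2 * of_nat k" unfolding X_def k by simp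
    also have "... = 2 * (wX - of_nat k)" using wX(2) by (simp add: algebra_simps)
    finally have e: "1 = 2 * (wX - of_nat k)" .
    have "wX - of_nat k \<in> ZZ N" using wX(1) ZZ_nat ZZ_diff by blast
    then obtain P where "wX - of_nat k = evz P (zr N)" unfolding ZZ_def by blast
    then show False using e rou_zr[OF N] by metis
  qed
qed

lemma descent2:
  assumes a: "a \<in> Kprime" and b: "b \<in> Kprime" and c: "c \<in> Kprime" and a0: "a \<noteq> 0" and mu: "\<mu> \<noteq> 0"
    and fa: "frob a = \<mu> * a \<or> frob a = - (\<mu> * a)"
    and fb: "frob b = \<mu> * b \<or> frob b = - (\<mu> * b)"
    and fc: "frob c = \<mu> * c \<or> frob c = - (\<mu> * c)"
    and s: "a^2 + b^2 + c^2 = 0"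
  shows False
proof -
  have fa0: "frob a \<noteq> 0" using frob_nz[OF a a0] .
  have b': "b / a \<in> Kprime" using b a by (rule Kprime_divide)
  have c': "c / a \<in> Kprime" using c a by (rule Kprime_divide)
  have fb': "frob (b / a) = b / a \<or> frob (b / a) = - (b / a)"
    using fa fb frob_divide[OF b a a0] mu a0 by (auto simp: field_simps)
  have fc': "frob (c / a) = c / a \<or> frob (c / a) = - (c / a)"
    using fa fc frob_divide[OF c a a0] mu a0 by (auto simp: field_simps)
  have "1 + (b/a)^2 + (c/a)^2 = (a^2 + b^2 + c^2) / a^2" using a0 by (simp add: field_simps power2_eq_square)
  then have "1 + (b/a)^2 + (c/a)^2 = 0" using s by simp
  then show False using descent[OF b' c' fb' fc'] by simp
qed

no_notation Matrix.vec_index (infixl "$" 100)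
hide_const (open) Matrix.mat Determinant.det

lemma mat1_diag3: "(mat 1 :: complex^3^3) = diag3 1 1 1"
  unfolding diag3_def Finite_Cartesian_Product.mat_def by (intro arg_cong[where f=vec_lambda] ext) auto

lemma kleinV_diag: "\<psi> \<in> kleinV \<Longrightarrow> \<exists>e1 e2 e3. \<psi> = diag3 e1 e2 e3 \<and> (e1 = 1 \<or> e1 = -1) \<and> (e2 = 1 \<or> e2 = -1) \<and> (e3 = 1 \<or> e3 = -1)"
  unfolding kleinV_def using mat1_diag3 by auto

lemma diag_mult_entry:
  "(scale_mat c M ** diag3 e1 e2 e3) $ i $ j = c * M$i$j * (if j = 1 then e1 else if j = 2 then e2 else e3)"
proof -
  have "(scale_mat c M ** diag3 e1 e2 e3) $ i $ j = (\<Sum>k\<in>UNIV. (c * M$i$k) * (diag3 e1 e2 e3)$k$j)"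
    by (simp add: matrix_matrix_mult_def scale_mat_def)
  also have "... = (c * M$i$1) * (diag3 e1 e2 e3)$1$j + (c * M$i$2) * (diag3 e1 e2 e3)$2$j + (c * M$i$3) * (diag3 e1 e2 e3)$3$j"
    by (simp only: sum_3)
  also have "... = c * M$i$j * (if j = 1 then e1 else if j = 2 then e2 else e3)"
    using exhaust_3[of j] by (auto simp: diag3_def)
  finally show ?thesis .
qed

lemma mv3: "((A::complex^3^3) *v v) $ i = A$i$1 * v$1 + A$i$2 * v$2 + A$i$3 * v$3"
  by (simp add: matrix_vector_mult_def sum_3)

lemma det_Kprime: "(\<forall>i j. A$i$j \<in> Kprime) \<Longrightarrow> det (A::complex^3^3) \<in> Kprime"
  unfolding det_3 by (simp add: Kprime_add Kprime_diff Kprime_mult)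

lemma frob3: "a1 \<in> Kprime \<Longrightarrow> a2 \<in> Kprime \<Longrightarrow> a3 \<in> Kprime \<Longrightarrow> b1 \<in> Kprime \<Longrightarrow> b2 \<in> Kprime \<Longrightarrow> b3 \<in> Kprime \<Longrightarrow>
  frob (a1 * b1 + a2 * b2 + a3 * b3) = frob a1 * frob b1 + frob a2 * frob b2 + frob a3 * frob b3"
  by (simp add: frob_add frob_mult Kprime_add Kprime_mult)

theorem lemma8p7:
  fixes \<psi> :: "(complex \<Rightarrow> complex) \<Rightarrow> complex^3^3"
    and Q M :: "complex^3^3"
  assumes psi_V: "\<forall>\<sigma>\<in>galK. \<psi> \<sigma> \<in> kleinV"
    and psi_cocycle: "\<forall>\<sigma>\<in>galK. \<forall>\<tau>\<in>galK. \<psi> (\<sigma> \<circ> \<tau>) = \<psi> \<sigma> ** \<psi> \<tau>"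
    and Q_rat: "\<forall>i j. Q$i$j \<in> \<rat>"
    and Q_sym: "transpose Q = Q"
    and M_K: "\<forall>i j. M$i$j \<in> Kprime"
    and M_inv: "invertible M"
    and F_iso: "\<exists>c. c \<noteq> 0 \<and> (\<forall>x. qf Q (M *v x) = c * qf (mat 1) x)"
    and twist: "\<forall>\<sigma>\<in>galK. \<exists>c. c \<noteq> 0 \<and> gal_mat \<sigma> M = scale_mat c M ** \<psi> \<sigma>"
  shows "\<not> (\<exists>x::complex^3. x \<noteq> 0 \<and> (\<forall>i. x$i \<in> \<rat>) \<and> qf Q x = 0)"
proof
  assume "\<exists>x::complex^3. x \<noteq> 0 \<and> (\<forall>i. x$i \<in> \<rat>) \<and> qf Q x = 0"
  then obtain y :: "complex^3" where y0: "y \<noteq> 0" and yQ: "\<forall>i. y$i \<in> \<rat>" and qy: "qf Q y = 0" by blast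
  obtain c0 where c0: "c0 \<noteq> 0" and iso: "\<forall>x. qf Q (M *v x) = c0 * qf (mat 1) x" using F_iso by blast
  have dM: "det M \<noteq> 0" using M_inv by (simp add: invertible_det_nz)
  define x where "x = (\<chi> k. det (\<chi> i j. if j = k then y $ i else M $ i $ j) / det M)"
  have Mx: "M *v x = y" using cramer[OF dM, of x y] unfolding x_def by simp
  have yK: "\<And>i. y$i \<in> Kprime"
  proof -
    fix i
    from yQ have "y$i \<in> \<rat>" by blast
    then obtain r where "y$i = of_rat r" by (auto elim: Rats_cases)
    then show "y$i \<in> Kprime" using Kprime_rat by simp
  qed
  have xK: "\<And>k. x$k \<in> Kprime"
  proof -
    fix k
    have "det (\<chi> i j. if j = k then y $ i else M $ i $ j) \<in> Kprime"
      by (rule det_Kprime) (simp add: yK M_K)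
    moreover have "det M \<in> Kprime" by (rule det_Kprime) (simp add: M_K)
    ultimately show "x$k \<in> Kprime" unfolding x_def by (simp add: Kprime_divide)
  qed
  have x0: "x \<noteq> 0"
  proof
    assume "x = 0"
    then have "y = 0" using Mx by simp
    then show False using y0 by simp
  qed
  have "c0 * qf (mat 1) x = 0" using iso Mx qy by metis
  then have q0: "qf (mat 1) x = 0" using c0 by simp
  have sq: "(x$1)^2 + (x$2)^2 + (x$3)^2 = 0"
  proof -
    have "qf (mat 1) x = (x$1)^2 + (x$2)^2 + (x$3)^2"
      unfolding qf_def sum_3 by (simp add: Finite_Cartesian_Product.mat_def power2_eq_square)
    then show ?thesis using q0 by simp
  qed
  obtain c1 where c1: "c1 \<noteq> 0" and tw: "gal_mat frob M = scale_mat c1 M ** \<psi> frob"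
    using twist frob_galK by blast
  obtain e1 e2 e3 where pd: "\<psi> frob = diag3 e1 e2 e3" and e1: "e1 = 1 \<or> e1 = -1"
    and e2: "e2 = 1 \<or> e2 = -1" and e3: "e3 = 1 \<or> e3 = -1"
    using kleinV_diag psi_V frob_galK by blast
  define de where "de j = (if j = 1 then e1 else if j = 2 then e2 else e3)" for j :: 3
  have de_sq: "\<And>j. de j * de j = 1" unfolding de_def using e1 e2 e3 by auto
  have fM: "\<And>i j. frob (M$i$j) = c1 * M$i$j * de j"
  proof -
    fix i j
    have "frob (M$i$j) = (gal_mat frob M)$i$j" by (simp add: gal_mat_def)
    also have "... = c1 * M$i$j * de j" unfolding tw pd diag_mult_entry de_def ..
    finally show "frob (M$i$j) = c1 * M$i$j * de j" .
  qed
  define x' where "x' = (\<chi> j. c1 * de j * frob (x$j))"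
  have Mx': "M *v x' = y"
  proof -
    have "(M *v x')$i = y$i" for i
    proof -
      have yi: "y$i = M$i$1 * x$1 + M$i$2 * x$2 + M$i$3 * x$3" using Mx mv3[of M x i] by simp
      have "y$i = frob (y$i)" using yK[of i] yQ by (metis Rats_cases frob_rat)
      also have "... = frob (M$i$1 * x$1 + M$i$2 * x$2 + M$i$3 * x$3)" using yi by simp
      also have "... = frob (M$i$1) * frob (x$1) + frob (M$i$2) * frob (x$2) + frob (M$i$3) * frob (x$3)"
        by (rule frob3) (simp_all add: M_K xK)
      also have "... = (M *v x')$i" unfolding mv3 x'_def fM by (simp add: algebra_simps)
      finally show ?thesis by simp
    qed
    then show ?thesis by (simp add: Finite_Cartesian_Product.vec_eq_iff)
  qed
  obtain Mi where Mi: "Mi ** M = mat 1" using M_inv unfolding invertible_def by blast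
  have "x' = x"
  proof -
    have "x' = Mi *v (M *v x')" using Mi by (simp add: matrix_vector_mul_assoc)
    also have "... = Mi *v (M *v x)" using Mx Mx' by simp
    also have "... = x" using Mi by (simp add: matrix_vector_mul_assoc)
    finally show ?thesis .
  qed
  define \<mu> where "\<mu> = inverse c1"
  have mu0: "\<mu> \<noteq> 0" unfolding \<mu>_def using c1 by simp
  have fx: "\<And>j. frob (x$j) = \<mu> * x$j \<or> frob (x$j) = - (\<mu> * x$j)"
  proof -
    fix j
    have xj: "x$j = c1 * de j * frob (x$j)" using \<open>x' = x\<close> unfolding x'_def by (metis vec_lambda_beta)
    have "frob (x$j) = de j * \<mu> * x$j"
    proof -
      have "de j * \<mu> * x$j = de j * \<mu> * (c1 * de j * frob (x$j))" using xj by simp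
      also have "... = (de j * de j) * (\<mu> * c1) * frob (x$j)" by (simp add: algebra_simps)
      also have "... = frob (x$j)" using de_sq c1 unfolding \<mu>_def by simp
      finally show ?thesis by simp
    qed
    moreover have "de j = 1 \<or> de j = -1" unfolding de_def using e1 e2 e3 by auto
    ultimately show "frob (x$j) = \<mu> * x$j \<or> frob (x$j) = - (\<mu> * x$j)" by auto
  qed
  obtain k where xk: "x$k \<noteq> 0" using x0 by (auto simp: Finite_Cartesian_Product.vec_eq_iff)
  consider "k = 1" | "k = 2" | "k = 3" using exhaust_3[of k] by blast
  then show False
  proof cases
    case 1
    have a0: "x$1 \<noteq> 0" using xk 1 by simp
    show False using descent2[OF xK[of 1] xK[of 2] xK[of 3] a0 mu0 fx[of 1] fx[of 2] fx[of 3]] sq by simp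
  next
    case 2
    have a0: "x$2 \<noteq> 0" using xk 2 by simp
    have s2: "(x$2)^2 + (x$1)^2 + (x$3)^2 = 0" using sq by (simp add: algebra_simps)
    show False using descent2[OF xK[of 2] xK[of 1] xK[of 3] a0 mu0 fx[of 2] fx[of 1] fx[of 3] s2] .
  next
    case 3
    have a0: "x$3 \<noteq> 0" using xk 3 by simp
    have s3: "(x$3)^2 + (x$1)^2 + (x$2)^2 = 0" using sq by (simp add: algebra_simps)
    show False using descent2[OF xK[of 3] xK[of 1] xK[of 2] a0 mu0 fx[of 3] fx[of 1] fx[of 2] s3] .
  qed
qed

end
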